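(* Let $a>0$, $u\neq 0$, $\lambda>0$ and $S$ a positive integer, and for $\gamma\in\mathbb{R}$ write $k:=a+\gamma$. On the set $I:=\{\gamma\in\mathbb{R}: 2k-\lambda[k^2+\tfrac2Sa^2]>0\}$ consider the (one-dimensional) expected test loss $$L_{\rm test}(\gamma)=\frac{a\gamma^2}{2k}\cdot\frac{2-\lambda k}{2k-\lambda\left[k^2+\frac2Sa^2\right]}\,u^2.$$ Then there exist $a$, $\lambda$ and $S$ such that $I$ is nonempty and the minimizer $\gamma^*=\arg\min_{\gamma\in I}L_{\rm test}(\gamma)$ satisfies $\gamma^*<0$.
   Context: This is the one-dimensional $L_2$-regularized linear regression trained by plain SGD with learning rate $\lambda$ and batch size $S$: inputs $x\sim\mathcal N(0,a)$, labels $y=ux$, loss $\frac12 a(w-u)^2+\frac12\gamma w^2$ with weight decay $\gamma$; $L_{\rm test}=\frac12 a\,\mathbb{E}_w[(w-u)^2]$ over the stationary distribution, which is finite exactly on $I$, where it is given by the displayed formula. *)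

theory Defs
  imports Complex_Main
begin

definition stab_set :: "real \<Rightarrow> real \<Rightarrow> nat \<Rightarrow> real set" where
  "stab_set a lam S = {g. 2 * (a + g) - lam * ((a + g)^2 + 2 / real S * a^2) > 0}"

definition L_test :: "real \<Rightarrow> real \<Rightarrow> real \<Rightarrow> nat \<Rightarrow> real \<Rightarrow> real" where
  "L_test a u lam S g =
     (a * g^2 / (2 * (a + g))) *
     ((2 - lam * (a + g)) / (2 * (a + g) - lam * ((a + g)^2 + 2 / real S * a^2))) * u^2"

end

theory Submission
  imports Defs
begin
lemma S: "stab_set 1 2 9 = {-2/3<..<-1/3}"
  unfolding stab_set_def
proof (intro set_eqI iffI)
  fix x assume "x \<in> {g::real. 2 * (1 + g) - 2 * ((1 + g)^2 + 2 / real (9::nat) * 1^2) > 0}"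
  then have "0 < (x + 2/3) * (-1/3 - x)" by (simp add: power2_eq_square algebra_simps)
  then show "x \<in> {-2/3<..<-1/3}" by (auto simp: zero_less_mult_iff)
next
  fix x :: real assume "x \<in> {-2/3<..<-1/3}"
  then have "0 < (x + 2/3) * (-1/3 - x)" by (auto intro: mult_pos_pos)
  then show "x \<in> {g::real. 2 * (1 + g) - 2 * ((1 + g)^2 + 2 / real (9::nat) * 1^2) > 0}"
    by (simp add: power2_eq_square algebra_simps)
qed

lemma aux: "(1::real) * g^2 / (2*A) * ((-2*g)/Q) * w = (-(g^3)/(A*Q)) * w"
proof (cases "A = 0 \<or> Q = 0")
  case True then show ?thesis by auto
next
  case False then show ?thesis by (simp add: field_simps power2_eq_square power3_eq_cube)
qed

lemma Lf: "L_test 1 u 2 9 g = (-(g^3) / ((1+g) * (2*(g+2/3)*(-1/3-g)))) * u^2"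
proof -
  have q: "2*(1+g) - 2*((1+g)^2 + 2/real(9::nat)*1^2) = 2*(g+2/3)*(-1/3-g)"
    by (simp add: power2_eq_square algebra_simps)
  have n: "2 - 2*(1+g) = -2*g" by simp
  show ?thesis
  proof (cases "g = -1 \<or> g = -2/3 \<or> g = -1/3")
    case True
    then show ?thesis by (elim disjE) (simp_all add: L_test_def power2_eq_square)
  next
    case False
    show ?thesis unfolding L_test_def q n by (rule aux)
  qed
qed

lemma half: "L_test 1 u 2 9 (-1/2) = 9/2 * u^2"
  unfolding Lf by (simp add: power3_eq_cube)

lemma big:
  fixes x :: real
  assumes "-2/3 < x" "x < -1/3" "x < -13/20 \<or> x > -7/20"
  shows "-(x^3) / ((1+x) * (2*(x+2/3)*(-1/3-x))) > 9/2"
proof -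
  have p1: "x+2/3 > 0" "-1/3-x > 0" "1+x > 0" using assms by auto
  have D: "(1+x) * (2*(x+2/3)*(-1/3-x)) > 0" using p1 by simp
  have c: "-(x^3) \<ge> 1/27"
  proof -
    have "(-x)^3 \<ge> (1/3)^3" by (rule power_mono) (use assms in auto)
    then show ?thesis by (simp add: power3_eq_cube)
  qed
  have pr: "(x+2/3)*(-1/3-x) < 1/180"
  proof (cases "x < -13/20")
    case True
    have "(x+2/3)*(-1/3-x) \<le> (1/60)*(-1/3-x)" using True p1 by (intro mult_right_mono) auto
    also have "\<dots> < 1/180" using assms by auto
    finally show ?thesis .
  next
    case False
    then have "x > -7/20" using assms by auto
    have "(x+2/3)*(-1/3-x) \<le> (x+2/3)*(1/60)" using \<open>x > -7/20\<close> p1 by (intro mult_left_mono) auto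
    also have "\<dots> < 1/180" using assms by auto
    finally show ?thesis .
  qed
  have "(1+x) * (2*((x+2/3)*(-1/3-x))) \<le> (2/3) * (2*((x+2/3)*(-1/3-x)))"
    using p1 assms by (intro mult_right_mono) auto
  also have "\<dots> < (2/3)*(2*(1/180))" using pr by linarith
  finally have "(1+x) * (2*((x+2/3)*(-1/3-x))) < 1/135" by simp
  then have "(1+x) * (2*(x+2/3)*(-1/3-x)) < 1/135" by (simp only: mult.assoc)
  then have "9/2 * ((1+x) * (2*(x+2/3)*(-1/3-x))) < -(x^3)" using c by linarith
  then show ?thesis using D by (metis pos_less_divide_eq mult.commute)
qed

theorem corollary1:
  fixes u :: real
  assumes "u \<noteq> 0"
  shows "\<exists>a lam :: real. \<exists>S :: nat. a > 0 \<and> lam > 0 \<and> S \<ge> 1 \<and>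
           stab_set a lam S \<noteq> {} \<and>
           (\<exists>g\<in>stab_set a lam S. \<forall>x\<in>stab_set a lam S. L_test a u lam S g \<le> L_test a u lam S x) \<and>
           (\<forall>g\<in>stab_set a lam S.
              (\<forall>x\<in>stab_set a lam S. L_test a u lam S g \<le> L_test a u lam S x) \<longrightarrow> g < 0)"
proof -
  let ?f = "L_test 1 u 2 9"
  have u2: "u^2 > 0" using assms by simp
  have cont: "continuous_on {-13/20..-7/20::real} ?f"
  proof -
    have "continuous_on {-13/20..-7/20::real} (\<lambda>g. (-(g^3) / ((1+g) * (2*(g+2/3)*(-1/3-g)))) * u^2)"
      by (intro continuous_intros) auto
    then show ?thesis unfolding Lf .
  qed
  obtain g0 where g0: "g0 \<in> {-13/20..-7/20}" "\<forall>y\<in>{-13/20..-7/20}. ?f g0 \<le> ?f y"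
    using continuous_attains_inf[OF compact_Icc _ cont] by auto
  have min: "\<forall>x\<in>stab_set 1 2 9. ?f g0 \<le> ?f x"
  proof
    fix x assume x: "x \<in> stab_set 1 2 9"
    show "?f g0 \<le> ?f x"
    proof (cases "x \<in> {-13/20..-7/20}")
      case True then show ?thesis using g0 by auto
    next
      case False
      have "?f g0 \<le> ?f (-1/2)" using g0 by auto
      also have "\<dots> = 9/2 * u^2" by (rule half)
      also have "\<dots> < (-(x^3) / ((1+x) * (2*(x+2/3)*(-1/3-x)))) * u^2"
        using big[of x] x False u2 unfolding S by (intro mult_strict_right_mono) auto
      also have "\<dots> = ?f x" by (rule Lf[symmetric])
      finally show ?thesis by simp
    qed
  qed
  have g0I: "g0 \<in> stab_set 1 2 9" using g0(1) unfolding S by auto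
  show ?thesis
    apply (rule exI[of _ 1], rule exI[of _ 2], rule exI[of _ 9])
    using min g0I unfolding S by auto
qed

end
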